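(* Let $V$ be a Seifert matrix and let $\omega,\omega'$ be unit complex numbers that are roots of the same irreducible polynomial over $\mathbb{Q}$. Then $\sigma_\omega(V)\equiv\sigma_{\omega'}(V)\pmod 2$. In particular, if $\omega_p\in S$ is a root of an irreducible rational polynomial having another root $\omega\in S$, no Seifert matrix $V$ (metabolic or not) can have $\sigma_{\omega_p}(V)$ odd while $\sigma_{\omega}(V)=0$.
   Context: A Seifert matrix is a square integral matrix $V$ with $\det(V-V^T)=\pm1$; for a unit complex number $\omega$, $\sigma_\omega(V)$ is the signature of the Hermitian matrix $(1-\omega)V+(1-\bar\omega)V^T$. $S$ is the set of unit complex numbers with positive imaginary part. *)

theory Defs
  imports "Jordan_Normal_Form.Char_Poly" "HOL-Computational_Algebra.Polynomial"
begin

definition seifert_matrix :: "int mat \<Rightarrow> bool" where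
  "seifert_matrix V \<longleftrightarrow> V \<in> carrier_mat (dim_row V) (dim_row V) \<and>
     det (V - transpose_mat V) \<in> {1, -1}"

definition signature :: "complex mat \<Rightarrow> int" where
  "signature H =
     int (\<Sum>x\<in>{x. poly (char_poly H) x = 0 \<and> x \<in> \<real> \<and> Re x > 0}. order x (char_poly H))
   - int (\<Sum>x\<in>{x. poly (char_poly H) x = 0 \<and> x \<in> \<real> \<and> Re x < 0}. order x (char_poly H))"

definition seifert_form :: "complex \<Rightarrow> int mat \<Rightarrow> complex mat" where
  "seifert_form w V = (1 - w) \<cdot>\<^sub>m map_mat of_int V
                     + (1 - cnj w) \<cdot>\<^sub>m map_mat of_int (transpose_mat V)"

definition tristram_levine_sig :: "complex \<Rightarrow> int mat \<Rightarrow> int" where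
  "tristram_levine_sig w V = signature (seifert_form w V)"

definition S_set :: "complex set" where
  "S_set = {w. norm w = 1 \<and> Im w > 0}"

end

theory Submission
  imports Defs "HOL-Computational_Algebra.Polynomial_Factorial" "HOL-Computational_Algebra.Euclidean_Algorithm"
    "HOL-Computational_Algebra.Field_as_Ring" "Jordan_Normal_Form.Jordan_Normal_Form_Existence"
begin


interpretation of_rat_poly_hom: map_poly_comm_ring_hom "of_rat :: rat \<Rightarrow> complex" ..

definition evw :: "complex \<Rightarrow> rat poly \<Rightarrow> complex" where
  "evw w q = poly (map_poly of_rat q) w"

lemma evw_hom: "comm_ring_hom (evw w)"
  unfolding evw_def by unfold_locales (auto simp: hom_distribs of_rat_poly_hom.hom_mult)

lemma irr_dvd:
  assumes "irreducible p" "evw w p = 0" "evw w q = 0"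
  shows "p dvd q"
proof (rule ccontr)
  assume nd: "\<not> p dvd q"
  interpret h: comm_ring_hom "evw w" by (rule evw_hom)
  have "coprime p q"
    using prime_elem_imp_coprime[OF irreducible_imp_prime_elem[OF assms(1)] nd] .
  then have g: "gcd p q = 1" by simp
  obtain x y where "bezout_coefficients p q = (x, y)" by (cases "bezout_coefficients p q")
  from bezout_coefficients[OF this] g have "x * p + y * q = 1" by simp
  then have "evw w (x * p + y * q) = 1" by simp
  with assms(2,3) show False by (simp add: h.hom_add h.hom_mult)
qed

lemma order0_eq:
  fixes f g :: "'a::idom poly"
  assumes "f \<noteq> 0" "g \<noteq> 0" "\<And>i. coeff f i = 0 \<longleftrightarrow> coeff g i = 0"
  shows "order 0 f = order 0 g"
proof -
  have "m \<le> order 0 f \<longleftrightarrow> m \<le> order 0 g" for m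
    using monom_1_dvd_iff[OF assms(1), of m] monom_1_dvd_iff[OF assms(2), of m]
      monom_1_dvd_iff'[of m f] monom_1_dvd_iff'[of m g] assms(3) by auto
  then show ?thesis by (meson le_antisym order_refl)
qed

lemma order_linear_prod:
  "order x (\<Prod>a\<leftarrow>as. [:- a, 1:]) = count_list as (x::complex)"
proof (induction as)
  case Nil
  then show ?case by (simp add: order_0I)
next
  case (Cons a as)
  have nz: "(\<Prod>a\<leftarrow>as. [:- a, 1:]) \<noteq> (0::complex poly)"
    by (auto simp: prod_list_zero_iff)
  have "order x ([:- a, 1:] * (\<Prod>a\<leftarrow>as. [:- a, 1:])) = order x [:- a, 1:] + order x (\<Prod>a\<leftarrow>as. [:- a, 1:])"
    by (rule order_mult) (metis nz mult_eq_0_iff pCons_eq_0_iff one_neq_zero)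
  moreover have "order x [:- a, 1:] = (if x = a then 1 else 0)"
    using order_power_n_n[of a 1] by (auto intro!: order_0I)
  ultimately show ?case using Cons by simp
qed

lemma count_list_filter: "Q x \<Longrightarrow> count_list (filter Q xs) x = count_list xs x"
  by (induction xs) auto

lemma sum_roots_prod:
  fixes as :: "complex list"
  shows "(\<Sum>x\<in>{x. poly (\<Prod>a\<leftarrow>as. [:- a, 1:]) x = 0 \<and> Q x}. order x (\<Prod>a\<leftarrow>as. [:- a, 1:]))
     = length (filter Q as)"
proof -
  have roots: "{x. poly (\<Prod>a\<leftarrow>as. [:- a, 1:]) x = 0 \<and> Q x} = {x \<in> set as. Q x}"
    by (auto simp: poly_prod_list prod_list_zero_iff)
  have "(\<Sum>x\<in>{x \<in> set as. Q x}. count_list as x) = (\<Sum>x\<in>{x \<in> set as. Q x}. count_list (filter Q as) x)"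
    by (intro sum.cong) (auto simp: count_list_filter)
  also have "\<dots> = length (filter Q as)"
    by (intro sum_count_set) auto
  finally show ?thesis unfolding roots order_linear_prod .
qed

lemma herm_real:
  fixes H :: "complex mat"
  assumes H: "H \<in> carrier_mat n n"
    and herm: "\<And>i j. i < n \<Longrightarrow> j < n \<Longrightarrow> H $$ (j, i) = cnj (H $$ (i, j))"
    and v: "v \<in> carrier_vec n" "v \<noteq> 0\<^sub>v n" and ev: "H *\<^sub>v v = a \<cdot>\<^sub>v v"
  shows "a \<in> \<real>"
proof -
  define s where "s = (\<Sum>i<n. \<Sum>j<n. cnj (v$i) * H$$(i,j) * v$j)"
  have row: "(H *\<^sub>v v)$i = (\<Sum>j<n. H$$(i,j) * v$j)" if "i<n" for i
    using H v that by (auto simp: scalar_prod_def atLeast0LessThan)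
  have evi: "(H *\<^sub>v v)$i = a * v$i" if "i<n" for i
    using that v unfolding ev by simp
  have "s = (\<Sum>i<n. cnj (v$i) * (H *\<^sub>v v)$i)"
    unfolding s_def by (intro sum.cong refl) (simp add: row sum_distrib_left mult.assoc)
  also have "\<dots> = (\<Sum>i<n. a * of_real ((cmod (v$i))\<^sup>2))"
  proof (intro sum.cong refl)
    fix i assume "i \<in> {..<n}"
    then have "(H *\<^sub>v v)$i = a * v$i" using evi by simp
    moreover have "cnj (v$i) * v$i = of_real ((cmod (v$i))\<^sup>2)"
      unfolding complex_norm_square by (rule mult.commute)
    ultimately show "cnj (v$i) * (H *\<^sub>v v)$i = a * of_real ((cmod (v$i))\<^sup>2)"
      by (metis mult.left_commute)
  qed
  also have "\<dots> = a * of_real (\<Sum>i<n. (cmod (v$i))\<^sup>2)"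
    by (simp add: sum_distrib_left)
  finally have s1: "s = a * of_real (\<Sum>i<n. (cmod (v$i))\<^sup>2)" .
  have "cnj s = (\<Sum>i<n. \<Sum>j<n. v$i * cnj (H$$(i,j)) * cnj (v$j))"
    unfolding s_def cnj_sum complex_cnj_mult complex_cnj_cnj ..
  also have "\<dots> = (\<Sum>i<n. \<Sum>j<n. v$i * H$$(j,i) * cnj (v$j))"
  proof (intro sum.cong refl)
    fix i j assume "i \<in> {..<n}" "j \<in> {..<n}"
    then have "H$$(j,i) = cnj (H$$(i,j))" by (intro herm) auto
    then show "v$i * cnj (H$$(i,j)) * cnj (v$j) = v$i * H$$(j,i) * cnj (v$j)" by simp
  qed
  also have "\<dots> = (\<Sum>j<n. \<Sum>i<n. v$i * H$$(j,i) * cnj (v$j))"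
    by (rule sum.swap)
  also have "\<dots> = s" unfolding s_def
    by (intro sum.cong refl) (simp add: mult.commute mult.left_commute)
  finally have "cnj s = s" .
  then have "Im (cnj s) = Im s" by simp
  then have ims: "Im s = 0" by simp
  have "\<exists>i<n. v$i \<noteq> 0"
  proof (rule ccontr)
    assume "\<not> ?thesis"
    then have "v = 0\<^sub>v n" using v(1) by (intro eq_vecI) auto
    with v(2) show False by simp
  qed
  then obtain i where i: "i < n" "v$i \<noteq> 0" by blast
  have "(\<Sum>i<n. (cmod (v$i))\<^sup>2) > 0"
    using i by (intro sum_pos2[of _ i]) auto
  moreover have "Im s = Im a * (\<Sum>i<n. (cmod (v$i))\<^sup>2)" using s1 by simp
  ultimately have "Im a = 0" using ims by simp
  then show ?thesis by (simp add: complex_is_Real_iff)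
qed

lemma herm_sig:
  fixes H :: "complex mat"
  assumes H: "H \<in> carrier_mat n n"
    and herm: "\<And>i j. i < n \<Longrightarrow> j < n \<Longrightarrow> H $$ (j, i) = cnj (H $$ (i, j))"
  shows "\<exists>N. signature H = int n - int (order 0 (char_poly H)) - 2 * int N"
proof -
  obtain as where cp: "char_poly H = (\<Prod>a\<leftarrow>as. [:- a, 1:])" and len: "length as = n"
    using char_poly_factorized[OF H] by blast
  have real: "a \<in> \<real>" if "a \<in> set as" for a
  proof -
    have "poly (char_poly H) a = 0" using that by (simp add: cp poly_prod_list prod_list_zero_iff)
    then have "eigenvalue H a" using eigenvalue_root_char_poly[OF H] by simp
    then obtain v where "eigenvector H v a" unfolding eigenvalue_def by blast
    then show ?thesis using herm_real[OF H herm] H unfolding eigenvector_def by auto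
  qed
  define P where "P = (\<lambda>x::complex. x \<in> \<real> \<and> Re x > 0)"
  define Nn where "Nn = (\<lambda>x::complex. x \<in> \<real> \<and> Re x < 0)"
  have sp: "(\<Sum>x\<in>{x. poly (char_poly H) x = 0 \<and> x \<in> \<real> \<and> Re x > 0}. order x (char_poly H))
      = length (filter P as)"
    using sum_roots_prod[of as P] unfolding cp P_def by simp
  have sn: "(\<Sum>x\<in>{x. poly (char_poly H) x = 0 \<and> x \<in> \<real> \<and> Re x < 0}. order x (char_poly H))
      = length (filter Nn as)"
    using sum_roots_prod[of as Nn] unfolding cp Nn_def by simp
  have z: "order 0 (char_poly H) = length (filter (\<lambda>x. \<not> P x \<and> \<not> Nn x) as)"
  proof -
    have "order 0 (char_poly H) = length (filter ((=) 0) as)"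
      unfolding cp order_linear_prod count_list_eq_length_filter ..
    also have "filter ((=) 0) as = filter (\<lambda>x. \<not> P x \<and> \<not> Nn x) as"
    proof (rule filter_cong[OF refl])
      fix x assume "x \<in> set as"
      then have "x \<in> \<real>" by (rule real)
      then show "(0 = x) = (\<not> P x \<and> \<not> Nn x)" unfolding P_def Nn_def
        by (auto simp: complex_is_Real_iff complex_eq_iff)
    qed
    finally show ?thesis .
  qed
  have "length as = length (filter P as) + length (filter (\<lambda>x. \<not> P x) as)"
    by (simp add: sum_length_filter_compl)
  also have "length (filter (\<lambda>x. \<not> P x) as) = length (filter Nn (filter (\<lambda>x. \<not> P x) as))
      + length (filter (\<lambda>x. \<not> Nn x) (filter (\<lambda>x. \<not> P x) as))"
    by (rule sum_length_filter_compl[symmetric])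
  also have "filter Nn (filter (\<lambda>x. \<not> P x) as) = filter Nn as"
    unfolding filter_filter by (rule filter_cong) (auto simp: P_def Nn_def)
  also have "filter (\<lambda>x. \<not> Nn x) (filter (\<lambda>x. \<not> P x) as) = filter (\<lambda>x. \<not> P x \<and> \<not> Nn x) as"
    unfolding filter_filter by (rule filter_cong) auto
  finally have "n = length (filter P as) + length (filter Nn as) + order 0 (char_poly H)"
    using len z by simp
  then have "signature H = int n - int (order 0 (char_poly H)) - 2 * int (length (filter Nn as))"
    unfolding signature_def sp sn by simp
  then show ?thesis by blast
qed

lemma mp_pCons: "map_poly (of_rat::rat\<Rightarrow>complex) (pCons a p) = pCons (of_rat a) (map_poly of_rat p)"
  by (rule Polynomial.map_poly_pCons) simp

definition Apoly :: "int mat \<Rightarrow> rat poly mat" where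
  "Apoly V = mat (dim_row V) (dim_row V)
     (\<lambda>(i,j). [: - of_int (V$$(j,i)), of_int (V$$(i,j)) + of_int (V$$(j,i)), - of_int (V$$(i,j)) :])"

lemma seif_map:
  assumes V: "V \<in> carrier_mat n n" and w: "norm w = 1"
  shows "map_mat (evw w) (Apoly V) = w \<cdot>\<^sub>m seifert_form w V"
proof (rule eq_matI)
  have wc: "w * cnj w = 1" using complex_norm_square[of w] w by simp
  fix i j assume i: "i < dim_row (w \<cdot>\<^sub>m seifert_form w V)" and j: "j < dim_col (w \<cdot>\<^sub>m seifert_form w V)"
  then have i': "i < n" and j': "j < n" using V by (auto simp: seifert_form_def)
  have "map_mat (evw w) (Apoly V) $$ (i, j) = - of_int (V$$(j,i)) + w * (of_int (V$$(i,j)) + of_int (V$$(j,i))) - w * w * of_int (V$$(i,j))"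
    using i' j' V by (simp add: Apoly_def evw_def mp_pCons algebra_simps of_rat_minus of_rat_add)
  also have "\<dots> = (w \<cdot>\<^sub>m seifert_form w V) $$ (i, j)"
    using i' j' V by (simp add: seifert_form_def algebra_simps wc)
  finally show "map_mat (evw w) (Apoly V) $$ (i, j) = (w \<cdot>\<^sub>m seifert_form w V) $$ (i, j)" .
qed (use V in \<open>auto simp: seifert_form_def Apoly_def\<close>)

lemma Apoly_carrier: "Apoly V \<in> carrier_mat (dim_row V) (dim_row V)"
  by (simp add: Apoly_def)

lemma key:
  assumes sm: "seifert_matrix V" and u: "norm u = 1"
  shows "\<exists>N. tristram_levine_sig u V = int (dim_row V)
            - int (order 0 (map_poly (evw u) (char_poly (Apoly V)))) - 2 * int N"
proof -
  define n where "n = dim_row V"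
  have V: "V \<in> carrier_mat n n" using sm unfolding seifert_matrix_def n_def by blast
  define H where "H = seifert_form u V"
  have H: "H \<in> carrier_mat n n" using V by (simp add: H_def seifert_form_def)
  have herm: "H $$ (j, i) = cnj (H $$ (i, j))" if "i < n" "j < n" for i j
    using that V by (simp add: H_def seifert_form_def algebra_simps)
  obtain N where N: "signature H = int n - int (order 0 (char_poly H)) - 2 * int N"
    using herm_sig[OF H herm] by blast
  have u0: "u \<noteq> 0" using u by auto
  interpret h: comm_ring_hom "evw u" by (rule evw_hom)
  have "order 0 (char_poly H) = order (0 / u) (char_poly H)" by simp
  also have "\<dots> = order 0 (char_poly (u \<cdot>\<^sub>m H))"
    using order_char_poly_smult[OF H u0, of 0] by simp
  also have "u \<cdot>\<^sub>m H = map_mat (evw u) (Apoly V)"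
    using seif_map[OF V u] by (simp add: H_def)
  also have "char_poly \<dots> = map_poly (evw u) (char_poly (Apoly V))"
    by (rule h.char_poly_hom[OF Apoly_carrier])
  finally have eq: "order 0 (char_poly H) = order 0 (map_poly (evw u) (char_poly (Apoly V)))" .
  show ?thesis unfolding tristram_levine_sig_def
    by (rule exI[of _ N]) (use N eq in \<open>simp add: H_def n_def\<close>)
qed

lemma map_char_nz: "map_poly (evw u) (char_poly (Apoly V)) \<noteq> 0"
proof -
  interpret h: comm_ring_hom "evw u" by (rule evw_hom)
  have "map_poly (evw u) (char_poly (Apoly V)) = char_poly (map_mat (evw u) (Apoly V))"
    by (rule h.char_poly_hom[OF Apoly_carrier, symmetric])
  moreover have "monic (char_poly (map_mat (evw u) (Apoly V)))"
    using degree_monic_char_poly[of "map_mat (evw u) (Apoly V)" "dim_row V"] Apoly_carrier[of V]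
    by simp
  ultimately show ?thesis by auto
qed

lemma arith_par:
  fixes x y m k :: int and a b :: nat
  assumes "x = m - k - 2 * int a" "y = m - k - 2 * int b"
  shows "x mod 2 = y mod 2 \<and> (Q \<longrightarrow> \<not> (odd y \<and> x = 0))"
proof -
  have e: "x = y + 2 * (int b - int a)" using assms by simp
  have m: "x mod 2 = y mod 2" unfolding e by (metis mod_mult_self2 mult.commute)
  then show ?thesis by (auto simp: even_iff_mod_2_eq_zero)
qed

theorem mainTheorem8:
  fixes V :: "int mat" and w w' :: complex and p :: "rat poly"
  assumes "seifert_matrix V"
    and "norm w = 1" and "norm w' = 1"
    and "irreducible p"
    and "poly (map_poly of_rat p) w = 0" and "poly (map_poly of_rat p) w' = 0"
  shows "tristram_levine_sig w V mod 2 = tristram_levine_sig w' V mod 2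
    \<and> (w \<in> S_set \<and> w' \<in> S_set \<longrightarrow>
         \<not> (odd (tristram_levine_sig w' V) \<and> tristram_levine_sig w V = 0))"
proof -
  have pw: "evw w p = 0" and pw': "evw w' p = 0" using assms(5,6) by (simp_all add: evw_def)
  have iff: "evw w c = 0 \<longleftrightarrow> evw w' c = 0" for c
  proof -
    interpret h1: comm_ring_hom "evw w" by (rule evw_hom)
    interpret h2: comm_ring_hom "evw w'" by (rule evw_hom)
    show ?thesis
    proof
      assume "evw w c = 0"
      then have "p dvd c" by (rule irr_dvd[OF assms(4) pw])
      then obtain k where "c = p * k" by blast
      then show "evw w' c = 0" by (simp add: h2.hom_mult pw')
    next
      assume "evw w' c = 0"
      then have "p dvd c" by (rule irr_dvd[OF assms(4) pw'])
      then obtain k where "c = p * k" by blast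
      then show "evw w c = 0" by (simp add: h1.hom_mult pw)
    qed
  qed
  have ord: "order 0 (map_poly (evw w) (char_poly (Apoly V))) = order 0 (map_poly (evw w') (char_poly (Apoly V)))"
  proof (rule order0_eq[OF map_char_nz map_char_nz])
    fix i
    interpret h1: comm_ring_hom "evw w" by (rule evw_hom)
    interpret h2: comm_ring_hom "evw w'" by (rule evw_hom)
    show "coeff (map_poly (evw w) (char_poly (Apoly V))) i = 0 \<longleftrightarrow> coeff (map_poly (evw w') (char_poly (Apoly V))) i = 0"
      by (simp add: coeff_map_poly iff)
  qed
  obtain N where N: "tristram_levine_sig w V = int (dim_row V)
            - int (order 0 (map_poly (evw w) (char_poly (Apoly V)))) - 2 * int N"
    using key[OF assms(1,2)] by blast
  obtain N' where N': "tristram_levine_sig w' V = int (dim_row V)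
            - int (order 0 (map_poly (evw w) (char_poly (Apoly V)))) - 2 * int N'"
    using key[OF assms(1,3)] ord by auto
  show ?thesis by (rule arith_par[OF N N'])
qed

end
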